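(* Let $P$ be an $n\times n$ sign pattern. If there is a nilpotent matrix $A\in\mathcal{Q}(P)$ with the nSSP, then there is a nilpotent matrix $A'\in\mathcal{Q}(P)$ of index $n$ (i.e., $A'^{\,n-1}\neq O$) with the nSSP.
   Context: A sign pattern is an array with entries in $\{+,-,0\}$; its qualitative class $\mathcal{Q}(P)$ is the set of real matrices of the same size whose entries have the signs prescribed by $P$. $\circ$ is the entrywise product. A real $n\times n$ matrix $A$ has the nSSP if $X=O$ is the only real $n\times n$ matrix with $A\circ X=O$ and $AX^\top-X^\top A=O$. *)

theory Defs
  imports "HOL-Analysis.Analysis"
begin

datatype sign_entry = Pos | Neg | Zer

type_synonym 'n sign_pattern = "sign_entry ^ 'n ^ 'n"

definition has_sign :: "real \<Rightarrow> sign_entry \<Rightarrow> bool" where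
  "has_sign x s = (case s of Pos \<Rightarrow> x > 0 | Neg \<Rightarrow> x < 0 | Zer \<Rightarrow> x = 0)"

definition qual_class :: "'n::finite sign_pattern \<Rightarrow> (real ^ 'n ^ 'n) set" where
  "qual_class P = {A. \<forall>i j. has_sign (A $ i $ j) (P $ i $ j)}"

primrec matpow :: "real ^ 'n::finite ^ 'n \<Rightarrow> nat \<Rightarrow> real ^ 'n ^ 'n" where
  "matpow A 0 = mat 1"
| "matpow A (Suc k) = A ** matpow A k"

definition nilpotent_mat :: "real ^ 'n::finite ^ 'n \<Rightarrow> bool" where
  "nilpotent_mat A = (\<exists>k. matpow A k = 0)"

definition hadamard :: "real ^ 'n::finite ^ 'n \<Rightarrow> real ^ 'n ^ 'n \<Rightarrow> real ^ 'n ^ 'n" where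
  "hadamard A X = (\<chi> i j. A $ i $ j * X $ i $ j)"

definition nSSP :: "real ^ 'n::finite ^ 'n \<Rightarrow> bool" where
  "nSSP A = (\<forall>X. hadamard A X = 0 \<and> A ** transpose X - transpose X ** A = 0 \<longrightarrow> X = 0)"

end

theory Submission
  imports Defs
begin

lemma inv_props:
  fixes S :: "real^'n::finite^'n"
  assumes "invertible S"
  shows "S ** matrix_inv S = mat 1" "matrix_inv S ** S = mat 1"
proof -
  have "\<exists>A'. S ** A' = mat 1 \<and> A' ** S = mat 1" using assms unfolding invertible_def by blast
  then have "S ** matrix_inv S = mat 1 \<and> matrix_inv S ** S = mat 1"
    unfolding matrix_inv_def by (rule someI_ex)
  then show "S ** matrix_inv S = mat 1" "matrix_inv S ** S = mat 1" by auto
qed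

lemma matpow_sim:
  fixes S N :: "real^'n::finite^'n"
  assumes "invertible S"
  shows "matpow (S ** N ** matrix_inv S) k = S ** matpow N k ** matrix_inv S"
proof (induction k)
  case 0
  then show ?case using inv_props[OF assms] by simp
next
  case (Suc k)
  have "matpow (S ** N ** matrix_inv S) (Suc k) = (S ** N ** matrix_inv S) ** (S ** matpow N k ** matrix_inv S)"
    using Suc by simp
  also have "\<dots> = S ** N ** (matrix_inv S ** S) ** matpow N k ** matrix_inv S"
    by (simp add: matrix_mul_assoc)
  also have "\<dots> = S ** matpow N (Suc k) ** matrix_inv S"
    using inv_props[OF assms] by (simp add: matrix_mul_assoc)
  finally show ?case .
qed

lemma matpow_vec: "matpow A (Suc k) *v x = A *v (matpow A k *v x)"
  by (simp add: matrix_vector_mul_assoc)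

lemma span_image_in:
  fixes B :: "real^'n::finite^'n"
  assumes "x \<in> span S" "\<And>s. s \<in> S \<Longrightarrow> B *v s \<in> T" "subspace T"
  shows "B *v x \<in> T"
proof (rule span_induct_alt[OF assms(1)])
  show "B *v 0 \<in> T" using assms(3) by (simp add: subspace_0)
next
  fix c x y assume 2: "x \<in> S" "B *v y \<in> T"
  have "B *v (c *\<^sub>R x + y) = c *\<^sub>R (B *v x) + B *v y"
    using matrix_vector_mul_linear[of B] by (simp add: linear_add linear_scale)
  then show "B *v (c *\<^sub>R x + y) \<in> T" using 2 assms by (simp add: subspace_add subspace_scale)
qed

lemma flag_step:
  fixes A :: "real^'n::finite^'n"
  assumes "subspace W" "u \<notin> W" "matpow A k = 0"
  shows "\<exists>v. v \<notin> W \<and> A *v v \<in> W"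
proof -
  define p where "p m = matpow A m *v u" for m
  have ex: "\<exists>m. p m \<in> W" using assms by (auto simp: p_def intro!: exI[of _ k] subspace_0)
  define m where "m = (LEAST m. p m \<in> W)"
  have pm: "p m \<in> W" unfolding m_def using ex by (rule LeastI_ex)
  have m0: "m \<noteq> 0" using pm assms(2) by (cases m) (auto simp: p_def matrix_vector_mul_lid)
  have "p (m - 1) \<notin> W" using m0 unfolding m_def
    by (metis diff_less gr_zeroI less_numeral_extra(1) m_def not_less_Least)
  moreover have "A *v p (m - 1) = p m" using m0 unfolding p_def
    by (metis Suc_pred' matpow_vec not_gr_zero)
  ultimately show ?thesis using pm by metis
qed

lemma dim_card: "DIM(real^'n::finite) = CARD('n)" by simp

lemma flag_exists:
  fixes A :: "real^'n::finite^'n"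
  assumes "matpow A k = 0"
  shows "m \<le> CARD('n) \<Longrightarrow> \<exists>w::nat \<Rightarrow> real^'n. \<forall>j<m. w j \<notin> span (w ` {..<j}) \<and> A *v w j \<in> span (w ` {..<j})"
proof (induction m)
  case 0
  then show ?case by auto
next
  case (Suc m)
  then obtain w where w: "\<forall>j<m. w j \<notin> span (w ` {..<j}) \<and> A *v w j \<in> span (w ` {..<j})" by auto
  have "span (w ` {..<m}) \<noteq> UNIV"
  proof
    assume "span (w ` {..<m}) = UNIV"
    then have "dim (UNIV :: (real^'n) set) \<le> card (w ` {..<m})"
      by (intro dim_le_card) auto
    also have "\<dots> \<le> m" using card_image_le[of "{..<m}" w] by simp
    finally show False using Suc.prems by simp
  qed
  then obtain u where "u \<notin> span (w ` {..<m})" by auto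
  then obtain v where v: "v \<notin> span (w ` {..<m})" "A *v v \<in> span (w ` {..<m})"
    using flag_step[OF subspace_span _ assms] by blast
  define w' where "w' = w(m := v)"
  have im: "j \<le> m \<Longrightarrow> w' ` {..<j} = w ` {..<j}" for j unfolding w'_def by auto
  show ?case
  proof (intro exI[of _ w'] allI impI)
    fix j assume "j < Suc m"
    then show "w' j \<notin> span (w' ` {..<j}) \<and> A *v w' j \<in> span (w' ` {..<j})"
      using w v im[of j] by (cases "j = m") (auto simp: w'_def)
  qed
qed

lemma flag_dim:
  fixes w :: "nat \<Rightarrow> real^'n::finite"
  assumes w: "\<forall>j<CARD('n). w j \<notin> span (w ` {..<j})"
  shows "j \<le> CARD('n) \<Longrightarrow> dim (w ` {..<j}) = j"
proof (induction j)
  case 0 then show ?case by simp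
next
  case (Suc j)
  have "w ` {..<Suc j} = insert (w j) (w ` {..<j})" by (simp add: lessThan_Suc)
  then show ?case using Suc w by (simp add: dim_insert)
qed

lemma flag_full:
  fixes w :: "nat \<Rightarrow> real^'n::finite"
  assumes w: "\<forall>j<CARD('n). w j \<notin> span (w ` {..<j})"
  shows "span (w ` {..<CARD('n)}) = UNIV"
  using flag_dim[OF w, of "CARD('n)"] by (simp add: dim_eq_full[symmetric])

lemma flag_inj:
  fixes w :: "nat \<Rightarrow> real^'n::finite"
  assumes w: "\<forall>j<CARD('n). w j \<notin> span (w ` {..<j})"
  shows "inj_on w {..<CARD('n)}"
proof (rule inj_onI)
  fix i j assume ij: "i \<in> {..<CARD('n)}" "j \<in> {..<CARD('n)}" "w i = w j"
  show "i = j"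
  proof (rule ccontr)
    assume "i \<noteq> j"
    then consider "i < j" | "j < i" by linarith
    then show False
    proof cases
      case 1
      then have "w j \<in> span (w ` {..<j})" using ij by (metis imageI lessThan_iff span_base)
      then show False using w ij by auto
    next
      case 2
      then have "w i \<in> span (w ` {..<i})" using ij by (metis imageI lessThan_iff span_base)
      then show False using w ij by auto
    qed
  qed
qed

lemma flag_indep:
  fixes w :: "nat \<Rightarrow> real^'n::finite"
  assumes w: "\<forall>j<CARD('n). w j \<notin> span (w ` {..<j})"
  shows "independent (w ` {..<CARD('n)})"
  by (rule card_le_dim_spanning[of _ UNIV]) (auto simp: flag_full[OF w] card_image[OF flag_inj[OF w]])

lemma shift_exists:
  fixes w :: "nat \<Rightarrow> real^'n::finite"
  assumes w: "\<forall>j<CARD('n). w j \<notin> span (w ` {..<j})"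
  shows "\<exists>M::real^'n^'n. \<forall>j<CARD('n). M *v w j = (if j = 0 then 0 else w (j - 1))"
proof -
  define f where "f x = (let j = inv_into {..<CARD('n)} w x in if j = 0 then 0 else w (j - 1))" for x
  obtain g where g: "linear g" "\<forall>x\<in>w ` {..<CARD('n)}. g x = f x"
    using linear_independent_extend[OF flag_indep[OF w]] by blast
  have "matrix g *v x = g x" for x
    using g(1) by (simp add: matrix_works linear_matrix_vector_mul_eq)
  moreover have "j < CARD('n) \<Longrightarrow> f (w j) = (if j = 0 then 0 else w (j - 1))" for j
    unfolding f_def using inv_into_f_f[OF flag_inj[OF w]] by simp
  ultimately show ?thesis using g(2) by (intro exI[of _ "matrix g"]) auto
qed

lemma span_mono_lt:
  fixes w :: "nat \<Rightarrow> real^'n::finite"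
  shows "i \<le> j \<Longrightarrow> span (w ` {..<i}) \<subseteq> span (w ` {..<j})"
  by (intro span_mono image_mono) auto

lemma flag_shift_step:
  fixes w :: "nat \<Rightarrow> real^'n::finite" and A M :: "real^'n^'n"
  assumes w: "\<forall>j<CARD('n). w j \<notin> span (w ` {..<j}) \<and> A *v w j \<in> span (w ` {..<j})"
    and M: "\<forall>j<CARD('n). M *v w j = (if j = 0 then 0 else w (j - 1))"
    and j: "j \<le> CARD('n)" and x: "x \<in> span (w ` {..<j})"
  shows "(A + t *\<^sub>R M) *v x \<in> span (w ` {..<j - 1})"
proof (rule span_image_in[OF x _ subspace_span])
  fix s assume "s \<in> w ` {..<j}"
  then obtain i where i: "i < j" "s = w i" by auto
  have sub: "span (w ` {..<i}) \<subseteq> span (w ` {..<j - 1})" using i by (intro span_mono_lt) auto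
  have a: "A *v w i \<in> span (w ` {..<j - 1})" using w i j sub by auto
  have m: "M *v w i \<in> span (w ` {..<j - 1})"
  proof (cases "i = 0")
    case True then show ?thesis using M i j by (simp add: span_zero)
  next
    case False
    then have "w (i - 1) \<in> span (w ` {..<i})" by (intro span_base) auto
    then show ?thesis using M i j sub False by auto
  qed
  have "(A + t *\<^sub>R M) *v w i = A *v w i + t *\<^sub>R (M *v w i)"
    by (simp add: matrix_vector_mult_add_rdistrib scaleR_matrix_vector_assoc)
  then show "(A + t *\<^sub>R M) *v s \<in> span (w ` {..<j - 1})"
    using a m i by (simp add: span_add span_scale)
qed

lemma flag_pow:
  fixes w :: "nat \<Rightarrow> real^'n::finite" and A M :: "real^'n^'n"
  assumes w: "\<forall>j<CARD('n). w j \<notin> span (w ` {..<j}) \<and> A *v w j \<in> span (w ` {..<j})"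
    and M: "\<forall>j<CARD('n). M *v w j = (if j = 0 then 0 else w (j - 1))"
    and j: "j \<le> CARD('n)" and x: "x \<in> span (w ` {..<j})"
  shows "matpow (A + t *\<^sub>R M) k *v x \<in> span (w ` {..<j - k})"
proof (induction k)
  case 0 then show ?case using x by (simp add: matrix_vector_mul_lid)
next
  case (Suc k)
  have "(A + t *\<^sub>R M) *v (matpow (A + t *\<^sub>R M) k *v x) \<in> span (w ` {..<j - k - 1})"
    by (rule flag_shift_step[OF w M _ Suc]) (use j in auto)
  then show ?case by (simp add: matpow_vec del: matpow.simps)
qed

lemma flag_nilp:
  fixes w :: "nat \<Rightarrow> real^'n::finite" and A M :: "real^'n^'n"
  assumes w: "\<forall>j<CARD('n). w j \<notin> span (w ` {..<j}) \<and> A *v w j \<in> span (w ` {..<j})"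
    and M: "\<forall>j<CARD('n). M *v w j = (if j = 0 then 0 else w (j - 1))"
  shows "matpow (A + t *\<^sub>R M) CARD('n) = 0"
proof -
  have "matpow (A + t *\<^sub>R M) CARD('n) *v x = 0 *v x" for x
  proof -
    have "x \<in> span (w ` {..<CARD('n)})" using flag_full[of w] w by auto
    from flag_pow[OF w M _ this, of t "CARD('n)"] show ?thesis by (simp add: span_empty)
  qed
  then show ?thesis by (simp add: matrix_eq)
qed

lemma flag_index:
  fixes w :: "nat \<Rightarrow> real^'n::finite" and A M :: "real^'n^'n"
  assumes w: "\<forall>j<CARD('n). w j \<notin> span (w ` {..<j}) \<and> A *v w j \<in> span (w ` {..<j})"
    and M: "\<forall>j<CARD('n). M *v w j = (if j = 0 then 0 else w (j - 1))"
    and a: "\<forall>j. 0 < j \<and> j < CARD('n) \<longrightarrow> A *v w j - a j *\<^sub>R w (j - 1) \<in> span (w ` {..<j - 1})"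
    and t: "\<forall>j. 0 < j \<and> j < CARD('n) \<longrightarrow> a j + t \<noteq> 0"
  shows "matpow (A + t *\<^sub>R M) (CARD('n) - 1) \<noteq> 0"
proof -
  define n where "n = CARD('n)"
  have n0: "0 < n" unfolding n_def by simp
  let ?N = "A + t *\<^sub>R M"
  have claim: "k \<le> n - 1 \<Longrightarrow> \<exists>c. c \<noteq> 0 \<and> matpow ?N k *v w (n - 1) - c *\<^sub>R w (n - 1 - k) \<in> span (w ` {..<n - 1 - k})" for k
  proof (induction k)
    case 0 then show ?case by (intro exI[of _ 1]) (simp add: matrix_vector_mul_lid span_zero)
  next
    case (Suc k)
    then obtain c where c: "c \<noteq> 0" "matpow ?N k *v w (n - 1) - c *\<^sub>R w (n - 1 - k) \<in> span (w ` {..<n - 1 - k})"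
      by auto
    define j where "j = n - 1 - k"
    have j: "0 < j" "j < n" "j - 1 = n - 1 - Suc k" using Suc.prems n0 unfolding j_def by auto
    define y where "y = matpow ?N k *v w (n - 1) - c *\<^sub>R w j"
    have y: "y \<in> span (w ` {..<j})" using c unfolding y_def j_def by simp
    have Ny: "?N *v y \<in> span (w ` {..<j - 1})"
      by (rule flag_shift_step[OF w M _ y]) (use j n_def in auto)
    define z where "z = A *v w j - a j *\<^sub>R w (j - 1)"
    have z: "z \<in> span (w ` {..<j - 1})" using a j n_def unfolding z_def by auto
    have Nw: "?N *v w j = (a j + t) *\<^sub>R w (j - 1) + z"
      using M j n_def unfolding z_def
      by (simp add: matrix_vector_mult_add_rdistrib scaleR_matrix_vector_assoc[symmetric] algebra_simps)
    have "matpow ?N (Suc k) *v w (n - 1) = ?N *v (c *\<^sub>R w j + y)"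
      unfolding y_def by (simp add: matpow_vec del: matpow.simps)
    also have "\<dots> = c *\<^sub>R (?N *v w j) + ?N *v y"
      using matrix_vector_mul_linear[of ?N] by (simp add: linear_add linear_scale)
    also have "\<dots> = (c * (a j + t)) *\<^sub>R w (j - 1) + (c *\<^sub>R z + ?N *v y)"
      by (subst Nw) (simp add: algebra_simps)
    finally have "matpow ?N (Suc k) *v w (n - 1) - (c * (a j + t)) *\<^sub>R w (n - 1 - Suc k) = c *\<^sub>R z + ?N *v y"
      using j by simp
    moreover have "c *\<^sub>R z + ?N *v y \<in> span (w ` {..<j - 1})" using z Ny by (simp add: span_add span_scale)
    ultimately show ?case using c t j n_def by (intro exI[of _ "c * (a j + t)"]) auto
  qed
  obtain c where c: "c \<noteq> 0" "matpow ?N (n - 1) *v w (n - 1) - c *\<^sub>R w 0 \<in> span (w ` {..<0})"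
    using claim[of "n - 1"] by auto
  have "w 0 \<notin> span (w ` {..<0})" using w[rule_format, of 0] by simp
  then have "w 0 \<noteq> 0" by (auto simp: span_empty)
  then have "matpow ?N (n - 1) *v w (n - 1) \<noteq> 0" using c by (simp add: span_empty)
  then show ?thesis unfolding n_def by auto
qed

lemma flag_coeffs:
  fixes w :: "nat \<Rightarrow> real^'n::finite" and A :: "real^'n^'n"
  assumes w: "\<forall>j<CARD('n). w j \<notin> span (w ` {..<j}) \<and> A *v w j \<in> span (w ` {..<j})"
  shows "\<exists>a. \<forall>j. 0 < j \<and> j < CARD('n) \<longrightarrow> A *v w j - a j *\<^sub>R w (j - 1) \<in> span (w ` {..<j - 1})"
proof -
  have "\<forall>j. \<exists>b. 0 < j \<and> j < CARD('n) \<longrightarrow> A *v w j - b *\<^sub>R w (j - 1) \<in> span (w ` {..<j - 1})"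
  proof
    fix j
    show "\<exists>b. 0 < j \<and> j < CARD('n) \<longrightarrow> A *v w j - b *\<^sub>R w (j - 1) \<in> span (w ` {..<j - 1})"
    proof (cases "0 < j \<and> j < CARD('n)")
      case True
      then have "w ` {..<j} = insert (w (j - 1)) (w ` {..<j - 1})"
        by (metis Suc_pred' image_insert lessThan_Suc)
      then show ?thesis using w True span_breakdown_eq by metis
    qed auto
  qed
  then show ?thesis by metis
qed


lemma regular_approx:
  fixes A :: "real^'n::finite^'n"
  assumes "matpow A k = 0"
  shows "\<exists>M. \<forall>r>0. \<exists>t. 0 < t \<and> t < r \<and> matpow (A + t *\<^sub>R M) CARD('n) = 0 \<and>
           matpow (A + t *\<^sub>R M) (CARD('n) - 1) \<noteq> 0"
proof -
  obtain w where w: "\<forall>j<CARD('n). w j \<notin> span (w ` {..<j}) \<and> A *v w j \<in> span (w ` {..<j})"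
    using flag_exists[OF assms, of "CARD('n)"] by auto
  obtain M where M: "\<forall>j<CARD('n). M *v w j = (if j = 0 then 0 else w (j - 1))"
    using shift_exists[of w] w by auto
  obtain a where a: "\<forall>j. 0 < j \<and> j < CARD('n) \<longrightarrow> A *v w j - a j *\<^sub>R w (j - 1) \<in> span (w ` {..<j - 1})"
    using flag_coeffs[OF w] by auto
  show ?thesis
  proof (intro exI[of _ M] allI impI)
    fix r :: real assume r: "0 < r"
    have "infinite {0<..<r}" using r by (simp add: infinite_Ioo)
    then have "{0<..<r} - (\<lambda>j. - a j) ` {..<CARD('n)} \<noteq> {}"
      by (metis Diff_empty Diff_eq_empty_iff finite_imageI finite_lessThan finite_subset)
    then obtain t where "t \<in> {0<..<r} - (\<lambda>j. - a j) ` {..<CARD('n)}" by blast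
    then have t: "0 < t" "t < r" "t \<notin> (\<lambda>j. - a j) ` {..<CARD('n)}" by auto
    have "\<forall>j. 0 < j \<and> j < CARD('n) \<longrightarrow> a j + t \<noteq> 0"
    proof (intro allI impI)
      fix j assume j: "0 < j \<and> j < CARD('n)"
      show "a j + t \<noteq> 0"
      proof
        assume "a j + t = 0"
        then have "t = - a j" by linarith
        then show False using t(3) j by blast
      qed
    qed
    then show "\<exists>t. 0 < t \<and> t < r \<and> matpow (A + t *\<^sub>R M) CARD('n) = 0 \<and>
           matpow (A + t *\<^sub>R M) (CARD('n) - 1) \<noteq> 0"
      using t flag_nilp[OF w M] flag_index[OF w M a] by blast
  qed
qed

lemma matrix_add_rdistrib': "((A::real^'n::finite^'n) + B) ** C = A ** C + B ** C"
  by (simp add: vec_eq_iff matrix_matrix_mult_def sum.distrib distrib_right)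

lemma matrix_scale_left: "((k::real) *\<^sub>R (A::real^'n::finite^'n)) ** C = k *\<^sub>R (A ** C)"
  by (simp add: vec_eq_iff matrix_matrix_mult_def sum_distrib_left mult.assoc)

lemma matrix_scale_right: "(A::real^'n::finite^'n) ** ((k::real) *\<^sub>R C) = k *\<^sub>R (A ** C)"
  by (simp add: vec_eq_iff matrix_matrix_mult_def sum_distrib_left mult.left_commute)

lemma bb_mult: "bounded_bilinear ((**) :: real^'n::finite^'n \<Rightarrow> real^'n^'n \<Rightarrow> real^'n^'n)"
  unfolding bilinear_conv_bounded_bilinear[symmetric] bilinear_def
  by (auto intro!: linearI simp: matrix_add_ldistrib matrix_add_rdistrib' matrix_scale_left matrix_scale_right)

lemma continuous_on_det:
  fixes f :: "'a::topological_space \<Rightarrow> real^'n::finite^'n"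
  assumes "continuous_on S f"
  shows "continuous_on S (\<lambda>x. det (f x))"
  unfolding det_def by (intro continuous_intros assms)

lemma entry_col: "((M::real^'n::finite^'n) *v axis j 1) $ i = M $ i $ j"
  by (simp add: matrix_vector_mult_def axis_def if_distrib cong: if_cong)

lemma inv_entry:
  fixes A :: "real^'n::finite^'n"
  assumes "det A \<noteq> 0"
  shows "matrix_inv A $ i $ j = det (\<chi> r c. if c = i then axis j 1 $ r else A $ r $ c) / det A"
proof -
  have "invertible A" using assms by (simp add: invertible_det_nz)
  then have "A *v (matrix_inv A *v axis j 1) = axis j 1"
    using inv_props(1)[of A] by (simp add: matrix_vector_mul_assoc matrix_vector_mul_lid)
  then have "matrix_inv A *v axis j 1 = (\<chi> k. det (\<chi> r c. if c = k then axis j 1 $ r else A $ r $ c) / det A)"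
    using cramer[OF assms] by blast
  then have "(matrix_inv A *v axis j 1) $ i = det (\<chi> r c. if c = i then axis j 1 $ r else A $ r $ c) / det A"
    by (simp only: vec_lambda_beta)
  then show ?thesis by (simp only: entry_col)
qed

lemma cont_if_entry: "continuous_on S (\<lambda>x::real^'n::finite^'n. if c = i then a else x $ r $ c)"
  by (cases "c = i") (simp_all add: continuous_on_const continuous_on_component continuous_on_id)

lemma continuous_on_inv: "continuous_on {A::real^'n::finite^'n. det A \<noteq> 0} matrix_inv"
proof -
  have "continuous_on {A::real^'n^'n. det A \<noteq> 0}
     (\<lambda>A. \<chi> i j. det (\<chi> r c. if c = i then axis j 1 $ r else A $ r $ c) / det A)"
    by (intro continuous_intros continuous_on_det cont_if_entry) auto
  then show ?thesis
  proof (rule continuous_on_eq)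
    fix A :: "real^'n^'n" assume "A \<in> {A. det A \<noteq> 0}"
    then have d: "det A \<noteq> 0" by simp
    show "(\<chi> i j. det (\<chi> r c. if c = i then axis j 1 $ r else A $ r $ c) / det A) = matrix_inv A"
      by (subst vec_eq_iff, intro allI, subst vec_eq_iff, intro allI) (simp only: vec_lambda_beta inv_entry[OF d])
  qed
qed

lemma open_det_nz: "open {K::real^'n::finite^'n. det (mat 1 + K) \<noteq> 0}"
proof -
  have "continuous_on UNIV (\<lambda>K::real^'n^'n. det (mat 1 + K))"
    by (intro continuous_on_det continuous_intros)
  then show ?thesis
    by (intro open_Collect_neq continuous_on_const)
qed

lemma isCont_J: "det (mat 1 + K) \<noteq> 0 \<Longrightarrow> isCont (\<lambda>K::real^'n::finite^'n. matrix_inv (mat 1 + K)) K"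
proof -
  have "continuous_on {K::real^'n^'n. det (mat 1 + K) \<noteq> 0} (\<lambda>K. matrix_inv (mat 1 + K))"
  proof (rule continuous_on_compose2[OF continuous_on_inv])
    show "continuous_on {K::real^'n^'n. det (mat 1 + K) \<noteq> 0} (\<lambda>K. mat 1 + K)"
      by (intro continuous_on_add continuous_on_const continuous_on_id)
  qed auto
  moreover assume "det (mat 1 + K) \<noteq> 0"
  ultimately show ?thesis using open_det_nz continuous_on_eq_continuous_at by blast
qed

lemma J0: "matrix_inv (mat 1 + 0 :: real^'n::finite^'n) = mat 1"
  using inv_props(1)[of "mat 1 :: real^'n^'n"]
  by (simp add: invertible_det_nz)

lemma J_deriv: "((\<lambda>K::real^'n::finite^'n. matrix_inv (mat 1 + K)) has_derivative (\<lambda>H. - H)) (at 0)"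
proof -
  let ?J = "\<lambda>K::real^'n^'n. matrix_inv (mat 1 + K)"
  obtain C where C0: "C \<ge> 0" and C1: "\<forall>a b::real^'n^'n. norm ((a::real^'n^'n) ** b) \<le> norm a * norm b * C"
    using bounded_bilinear.nonneg_bounded[OF bb_mult[where 'n='n]] by auto
  note C = C0 C1[rule_format]
  have ev: "eventually (\<lambda>h::real^'n^'n. det (mat 1 + h) \<noteq> 0) (at 0)"
    using open_det_nz by (intro eventually_at_topological[THEN iffD2]) (auto intro!: exI[of _ "{K. det (mat 1 + K) \<noteq> 0}"])
  have id: "?J h - mat 1 + h = h ** (h ** ?J h)" if "det (mat 1 + h) \<noteq> 0" for h
  proof -
    have "(mat 1 + h) ** ?J h = mat 1" using that inv_props(1) by (simp add: invertible_det_nz)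
    then have hJ: "h ** ?J h = mat 1 - ?J h" by (simp add: matrix_add_rdistrib' algebra_simps)
    have "h ** ((mat 1 - ?J h) + ?J h) = h ** (mat 1 - ?J h) + h ** ?J h"
      by (rule matrix_add_ldistrib)
    then have "h ** (mat 1 - ?J h) = h - h ** ?J h" by (simp add: eq_diff_eq)
    then show ?thesis by (simp add: hJ)
  qed
  have lim: "((\<lambda>h::real^'n^'n. C * norm (h ** ?J h)) \<longlongrightarrow> 0) (at 0)"
  proof -
    have "((\<lambda>h. h ** ?J h) \<longlongrightarrow> 0 ** ?J 0) (at 0)"
    proof (rule bounded_bilinear.tendsto[OF bb_mult])
      show "((\<lambda>h. h) \<longlongrightarrow> (0::real^'n^'n)) (at 0)" by (rule tendsto_ident_at)
      have "isCont ?J 0" by (rule isCont_J) (simp add: det_I)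
      then show "(?J \<longlongrightarrow> ?J 0) (at 0)" by (rule isContD)
    qed
    then have "((\<lambda>h. C * norm (h ** ?J h)) \<longlongrightarrow> C * norm (0 ** ?J 0 :: real^'n^'n)) (at 0)"
      by (intro tendsto_intros)
    then show ?thesis by simp
  qed
  have "((\<lambda>h. norm (?J (0 + h) - ?J 0 - - h) / norm h) \<longlongrightarrow> 0) (at 0)"
  proof (rule Lim_null_comparison[OF _ lim])
    show "\<forall>\<^sub>F h in at 0. norm (norm (?J (0 + h) - ?J 0 - - h) / norm h) \<le> C * norm (h ** ?J h)"
      using ev
    proof eventually_elim
      case (elim h)
      have "norm (?J (0 + h) - ?J 0 - - h) = norm (h ** (h ** ?J h))"
      proof -
        have "?J (0 + h) - ?J 0 - - h = ?J h - mat 1 + h"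
          by (simp only: J0 diff_minus_eq_add add_0_left)
        then show ?thesis using id[OF elim] by simp
      qed
      also have "\<dots> \<le> norm h * norm (h ** ?J h) * C" by (rule C(2))
      finally show ?case using C(1)
        by (cases "h = 0") (auto simp: divide_le_eq mult_ac)
    qed
  qed
  then show ?thesis unfolding has_derivative_at by (auto intro: bounded_linear_minus bounded_linear_ident)
qed

definition Pz :: "real^'n::finite^'n \<Rightarrow> real^'n^'n \<Rightarrow> real^'n^'n" where
  "Pz A X = (\<chi> i j. if A $ i $ j = 0 then X $ i $ j else 0)"
definition Pc :: "real^'n::finite^'n \<Rightarrow> real^'n^'n \<Rightarrow> real^'n^'n" where
  "Pc A X = (\<chi> i j. if A $ i $ j = 0 then 0 else X $ i $ j)"

lemma linear_Pz: "linear (Pz A)"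
  by (rule linearI) (auto simp: Pz_def vec_eq_iff)
lemma linear_Pc: "linear (Pc A)"
  by (rule linearI) (auto simp: Pc_def vec_eq_iff)
lemma bl_Pz: "bounded_linear (Pz A)"
  using linear_Pz linear_conv_bounded_linear by blast
lemma bl_Pc: "bounded_linear (Pc A)"
  using linear_Pc linear_conv_bounded_linear by blast
lemma linear_transpose': "linear (transpose :: real^'n::finite^'n \<Rightarrow> real^'n^'n)"
  by (rule linearI) (auto simp: transpose_def vec_eq_iff)

lemma inner_mat: "inner (X::real^'n::finite^'n) Y = (\<Sum>i\<in>UNIV. \<Sum>j\<in>UNIV. X $ i $ j * Y $ i $ j)"
  by (simp add: inner_vec_def)

definition Em :: "'n::finite \<Rightarrow> 'n \<Rightarrow> real^'n^'n" where
  "Em k l = (\<chi> i j. if i = k \<and> j = l then 1 else 0)"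

lemma Em_left: "(Em k l ** A) $ i $ j = (if i = k then A $ l $ j else 0)"
  by (simp add: Em_def matrix_matrix_mult_def if_distrib[of "\<lambda>x. x * _"] sum.delta cong: if_cong)
lemma Em_right: "(A ** Em k l) $ i $ j = (if j = l then A $ i $ k else 0)"
  by (simp add: Em_def matrix_matrix_mult_def if_distrib[of "\<lambda>x. _ * x"] sum.delta' cong: if_cong)

lemma sum_if_const: "(\<Sum>j\<in>S. if P then f j else (0::real)) = (if P then sum f S else 0)"
  by auto

lemma inner_comm: "inner Y (Em k l ** A - A ** Em k l) = (A ** transpose Y - transpose Y ** A) $ l $ k"
proof -
  have "inner Y (Em k l ** A - A ** Em k l) = (\<Sum>i\<in>UNIV. \<Sum>j\<in>UNIV. Y $ i $ j * ((if i = k then A $ l $ j else 0) - (if j = l then A $ i $ k else 0)))"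
    by (simp add: inner_vec_def Em_left Em_right)
  also have "\<dots> = (\<Sum>j\<in>UNIV. Y $ k $ j * A $ l $ j) - (\<Sum>i\<in>UNIV. Y $ i $ l * A $ i $ k)"
    by (simp add: right_diff_distrib sum_subtractf if_distrib[of "\<lambda>x. _ * x"] sum.delta sum.delta' sum_if_const cong: if_cong)
  also have "\<dots> = (A ** transpose Y - transpose Y ** A) $ l $ k"
    by (simp add: matrix_matrix_mult_def transpose_def mult.commute)
  finally show ?thesis .
qed

lemma L_surj:
  fixes A :: "real^'n::finite^'n"
  assumes nA: "nSSP A"
  shows "surj (\<lambda>p::(real^'n^'n) \<times> (real^'n^'n). Pz A (fst p ** A - A ** fst p) + Pc A (snd p))"
    (is "surj ?L")
proof (rule ccontr)
  assume ns: "\<not> surj ?L"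
  have lin: "linear ?L"
  proof (rule linearI)
    fix x y :: "(real^'n^'n) \<times> (real^'n^'n)" and c :: real
    show "?L (x + y) = ?L x + ?L y"
      using linear_add[OF linear_Pz] linear_add[OF linear_Pc]
      by (simp add: matrix_add_ldistrib matrix_add_rdistrib' algebra_simps)
         (simp add: vec_eq_iff Pz_def Pc_def matrix_add_ldistrib matrix_add_rdistrib' algebra_simps)
    show "?L (c *\<^sub>R x) = c *\<^sub>R ?L x"
      by (simp add: vec_eq_iff Pz_def Pc_def matrix_scale_left matrix_scale_right algebra_simps)
  qed
  have eqs: "span (range ?L) = range ?L"
    by (rule span_eq_iff[THEN iffD2]) (rule linear_subspace_image[OF lin subspace_UNIV])
  have "span (range ?L) \<noteq> UNIV"
  proof
    assume "span (range ?L) = UNIV"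
    then have "range ?L = UNIV" using eqs by simp
    then show False using ns by blast
  qed
  then have "dim (range ?L) < DIM(real^'n^'n)"
    using dim_eq_full[of "range ?L"] dim_subset_UNIV[of "range ?L"] by linarith
  then obtain Y where Y: "Y \<noteq> 0" "\<And>y. y \<in> span (range ?L) \<Longrightarrow> orthogonal Y y"
    using orthogonal_to_subspace_exists by blast
  have orth: "inner Y (?L p) = 0" for p
    using Y(2)[of "?L p"] by (simp add: span_base orthogonal_def)
  have z0: "A $ i $ j \<noteq> 0 \<Longrightarrow> Y $ i $ j = 0" for i j
  proof -
    have "?L (0, Y) = Pc A Y" by (simp add: Pz_def vec_eq_iff)
    then have "inner Y (Pc A Y) = 0" using orth[of "(0, Y)"] by simp
    then have "(\<Sum>i\<in>UNIV. \<Sum>j\<in>UNIV. if A $ i $ j = 0 then 0 else (Y $ i $ j)^2) = 0"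
      by (simp add: inner_vec_def Pc_def if_distrib[of "\<lambda>x. _ * x"] power2_eq_square cong: if_cong)
    then have "\<forall>i\<in>UNIV. (\<Sum>j\<in>UNIV. if A $ i $ j = 0 then 0 else (Y $ i $ j)^2) = 0"
      by (subst sum_nonneg_eq_0_iff[symmetric]) (auto intro: sum_nonneg)
    then have "\<forall>i j. (if A $ i $ j = 0 then 0 else (Y $ i $ j)^2) = 0"
      by (subst (asm) sum_nonneg_eq_0_iff) auto
    then show "A $ i $ j \<noteq> 0 \<Longrightarrow> Y $ i $ j = 0" by (metis power_eq_0_iff)
  qed
  have had: "hadamard A Y = 0"
    using z0 by (auto simp: hadamard_def vec_eq_iff)
  have innPz: "inner Y (Pz A X) = inner Y X" for X
    unfolding inner_vec_def Pz_def
    by (intro sum.cong refl) (auto simp: z0)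
  have comm: "A ** transpose Y - transpose Y ** A = 0"
  proof -
    have "(A ** transpose Y - transpose Y ** A) $ l $ k = 0" for l k
    proof -
      have "?L (Em k l, 0) = Pz A (Em k l ** A - A ** Em k l)" by (simp add: Pc_def vec_eq_iff)
      then have "inner Y (Pz A (Em k l ** A - A ** Em k l)) = 0" using orth[of "(Em k l, 0)"] by simp
      then show ?thesis by (simp add: innPz inner_comm)
    qed
    then show ?thesis by (simp add: vec_eq_iff)
  qed
  have "Y = 0" using nA had comm unfolding nSSP_def by blast
  then show False using Y(1) by simp
qed


lemma transpose_add': "transpose ((x::real^'n::finite^'n) + y) = transpose x + transpose y"
  by (simp add: transpose_def vec_eq_iff)
lemma transpose_scale': "transpose ((c::real) *\<^sub>R (x::real^'n::finite^'n)) = c *\<^sub>R transpose x"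
  by (simp add: transpose_def vec_eq_iff)

lemma matrix_sub_rdistrib': "((A::real^'n::finite^'n) - B) ** C = A ** C - B ** C"
  by (simp add: vec_eq_iff matrix_matrix_mult_def sum_subtractf left_diff_distrib)
lemma matrix_sub_ldistrib': "(C::real^'n::finite^'n) ** (A - B) = C ** A - C ** B"
  by (simp add: vec_eq_iff matrix_matrix_mult_def sum_subtractf right_diff_distrib)

lemma nSSP_near:
  fixes A :: "real^'n::finite^'n"
  assumes nA: "nSSP A"
  shows "\<exists>e>0. \<forall>B. dist B A < e \<longrightarrow> (\<forall>i j. (A $ i $ j = 0) = (B $ i $ j = 0)) \<longrightarrow> nSSP B"
proof -
  define S where "S = {X::real^'n^'n. Pc A X = 0}"
  have clS: "closed S" unfolding S_def
    by (intro closed_Collect_eq linear_continuous_on bl_Pc continuous_on_const)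
  have subS: "subspace S" unfolding S_def subspace_def
    using linear_add[OF linear_Pc, of A] linear_scale[OF linear_Pc, of A] linear_0[OF linear_Pc, of A]
    by auto
  define f where "f X = A ** transpose X - transpose X ** A" for X :: "real^'n^'n"
  have linf: "linear f"
  proof (rule linearI)
    fix x y :: "real^'n^'n" and c :: real
    show "f (x + y) = f x + f y" unfolding f_def
      by (simp add: transpose_add' matrix_add_ldistrib matrix_add_rdistrib' algebra_simps)
    show "f (c *\<^sub>R x) = c *\<^sub>R f x" unfolding f_def
      by (simp add: transpose_scale' matrix_scale_left matrix_scale_right algebra_simps)
  qed
  have blf: "bounded_linear f" using linf linear_conv_bounded_linear by blast
  have injf: "\<forall>X\<in>S. f X = 0 \<longrightarrow> X = 0"
  proof (intro ballI impI)
    fix X assume X: "X \<in> S" "f X = 0"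
    have "hadamard A X = 0"
    proof -
      have P: "Pc A X $ i $ j = 0" for i j using X(1) unfolding S_def by simp
      have "A $ i $ j * X $ i $ j = 0" for i j using P[of i j]
        by (cases "A $ i $ j = 0") (auto simp: Pc_def)
      then show ?thesis by (simp add: hadamard_def vec_eq_iff)
    qed
    then show "X = 0" using nA X(2) unfolding nSSP_def f_def by blast
  qed
  obtain c where c: "c > 0" "\<forall>X\<in>S. c * norm X \<le> norm (f X)"
    using injective_imp_isometric[OF clS subS blf injf] by blast
  obtain C where C0: "C \<ge> 0" and C1: "\<forall>a b::real^'n^'n. norm ((a::real^'n^'n) ** b) \<le> norm a * norm b * C"
    using bounded_bilinear.nonneg_bounded[OF bb_mult[where 'n='n]] by auto
  have blt: "bounded_linear (transpose :: real^'n^'n \<Rightarrow> real^'n^'n)"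
    using linear_transpose' linear_conv_bounded_linear by blast
  obtain Ct where Ct0: "Ct \<ge> 0" and Ct1: "\<forall>X::real^'n^'n. norm (transpose X) \<le> norm X * Ct"
    using bounded_linear.nonneg_bounded[OF blt] by auto
  define D where "D = 2 * C * Ct"
  have D0: "D \<ge> 0" unfolding D_def using C0 Ct0 by simp
  show ?thesis
  proof (intro exI[of _ "c / (D + 1)"] conjI allI impI)
    show "0 < c / (D + 1)" using c D0 by simp
    fix B :: "real^'n^'n"
    assume dB: "dist B A < c / (D + 1)" and zB: "\<forall>i j. (A $ i $ j = 0) = (B $ i $ j = 0)"
    show "nSSP B" unfolding nSSP_def
    proof (intro allI impI)
      fix X assume X: "hadamard B X = 0 \<and> B ** transpose X - transpose X ** B = 0"
      have XS: "X \<in> S"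
      proof -
        have "B $ i $ j * X $ i $ j = 0" for i j
        proof -
          have "hadamard B X $ i $ j = 0" using X by simp
          then show ?thesis by (simp add: hadamard_def)
        qed
        then have "Pc A X $ i $ j = 0" for i j using zB[rule_format, of i j]
          by (cases "A $ i $ j = 0") (auto simp: Pc_def)
        then have "Pc A X = 0" by (simp add: vec_eq_iff)
        then show ?thesis unfolding S_def by simp
      qed
      let ?T = "transpose X"
      have fX: "f X = (A - B) ** ?T - ?T ** (A - B)"
        using X unfolding f_def by (simp add: matrix_sub_rdistrib' matrix_sub_ldistrib' algebra_simps)
      have "norm (f X) \<le> norm ((A - B) ** ?T) + norm (?T ** (A - B))"
        unfolding fX by (rule norm_triangle_ineq4)
      also have "\<dots> \<le> norm (A - B) * norm ?T * C + norm ?T * norm (A - B) * C"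
        using C1 by (intro add_mono) auto
      also have "\<dots> = 2 * C * norm (A - B) * norm ?T" by (simp add: algebra_simps)
      also have "\<dots> \<le> 2 * C * norm (A - B) * (norm X * Ct)"
        using Ct1 C0 by (intro mult_left_mono) auto
      also have "\<dots> = D * norm (A - B) * norm X" unfolding D_def by (simp add: algebra_simps)
      finally have le: "c * norm X \<le> D * norm (A - B) * norm X" using c(2) XS by (meson order_trans)
      have nAB: "norm (A - B) < c / (D + 1)" using dB by (simp add: dist_norm norm_minus_commute)
      have "D * norm (A - B) \<le> D * (c / (D + 1))" using nAB D0 by (intro mult_left_mono) auto
      also have "\<dots> < c" using D0 c(1) by (simp add: field_simps)
      finally have lt: "D * norm (A - B) < c" .
      show "X = 0"
      proof (rule ccontr)
        assume "X \<noteq> 0"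
        then have "norm X > 0" by simp
        then have "c \<le> D * norm (A - B)" using le by (simp add: mult_le_cancel_right)
        then show False using lt by simp
      qed
    qed
  qed
qed

definition Cj :: "real^'n::finite^'n \<Rightarrow> real^'n^'n \<Rightarrow> real \<times> ((real^'n^'n) \<times> (real^'n^'n)) \<Rightarrow> real^'n^'n" where
  "Cj A M x = (mat 1 + fst (snd x)) ** (A + fst x *\<^sub>R M) ** matrix_inv (mat 1 + fst (snd x))"

lemma matrix_neg_right: "(A::real^'n::finite^'n) ** (- H) = - (A ** H)"
  by (simp add: vec_eq_iff matrix_matrix_mult_def sum_negf)

lemma Cj_deriv:
  fixes A M :: "real^'n::finite^'n"
  shows "(Cj A M has_derivative (\<lambda>h. fst h *\<^sub>R M + fst (snd h) ** A - A ** fst (snd h))) (at 0)"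
proof -
  have K: "((\<lambda>x::real \<times> ((real^'n^'n) \<times> (real^'n^'n)). fst (snd x)) has_derivative (\<lambda>h. fst (snd h))) (at 0)"
    by (intro has_derivative_fst has_derivative_snd has_derivative_ident)
  have U: "((\<lambda>x::real \<times> ((real^'n^'n) \<times> (real^'n^'n)). mat 1 + fst (snd x)) has_derivative (\<lambda>h. fst (snd h))) (at 0)"
    using has_derivative_add[OF has_derivative_const K] by simp
  have N: "((\<lambda>x::real \<times> ((real^'n^'n) \<times> (real^'n^'n)). A + fst x *\<^sub>R M) has_derivative (\<lambda>h. fst h *\<^sub>R M)) (at 0)"
    using has_derivative_add[OF has_derivative_const has_derivative_scaleR_left[OF has_derivative_fst[OF has_derivative_ident]]]
    by simp
  have J: "((\<lambda>x::real \<times> ((real^'n^'n) \<times> (real^'n^'n)). matrix_inv (mat 1 + fst (snd x))) has_derivative (\<lambda>h. - fst (snd h))) (at 0)"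
  proof -
    have "((\<lambda>K::real^'n^'n. matrix_inv (mat 1 + K)) has_derivative (\<lambda>H. - H)) (at (fst (snd (0::real \<times> ((real^'n^'n) \<times> (real^'n^'n))))))"
      using J_deriv by simp
    from diff_chain_at[OF K this] show ?thesis by (simp add: o_def)
  qed
  have "(Cj A M has_derivative
      (\<lambda>h. ((mat 1 + fst (snd (0::real \<times> ((real^'n^'n) \<times> (real^'n^'n))))) ** (A + fst (0::real \<times> ((real^'n^'n) \<times> (real^'n^'n))) *\<^sub>R M)) ** (- fst (snd h)) +
           ((mat 1 + fst (snd (0::real \<times> ((real^'n^'n) \<times> (real^'n^'n))))) ** (fst h *\<^sub>R M) + fst (snd h) ** (A + fst (0::real \<times> ((real^'n^'n) \<times> (real^'n^'n))) *\<^sub>R M)) ** matrix_inv (mat 1 + fst (snd (0::real \<times> ((real^'n^'n) \<times> (real^'n^'n))))))) (at 0)"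
    unfolding Cj_def by (rule bounded_bilinear.FDERIV[OF bb_mult bounded_bilinear.FDERIV[OF bb_mult U N] J])
  then show ?thesis
    by (rule has_derivative_eq_rhs)
       (simp add: fun_eq_iff J0[simplified] matrix_neg_right matrix_add_rdistrib' matrix_scale_right algebra_simps)
qed


lemma Cj_cont:
  fixes A M :: "real^'n::finite^'n"
  shows "continuous_on {x::real \<times> ((real^'n^'n) \<times> (real^'n^'n)). det (mat 1 + fst (snd x)) \<noteq> 0} (Cj A M)"
proof -
  let ?S = "{x::real \<times> ((real^'n^'n) \<times> (real^'n^'n)). det (mat 1 + fst (snd x)) \<noteq> 0}"
  have U: "continuous_on ?S (\<lambda>x. mat 1 + fst (snd x))"
    by (intro continuous_intros)
  have N: "continuous_on ?S (\<lambda>x. A + fst x *\<^sub>R M)"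
    by (intro continuous_intros)
  have J: "continuous_on ?S (\<lambda>x. matrix_inv (mat 1 + fst (snd x)))"
    by (rule continuous_on_compose2[OF continuous_on_inv U]) auto
  show ?thesis unfolding Cj_def
    by (intro bounded_bilinear.continuous_on[OF bb_mult] U N J)
qed

lemma open_S: "open {x::real \<times> ((real^'n::finite^'n) \<times> (real^'n^'n)). det (mat 1 + fst (snd x)) \<noteq> 0}"
proof -
  have "continuous_on UNIV (\<lambda>x::real \<times> ((real^'n^'n) \<times> (real^'n^'n)). det (mat 1 + fst (snd x)))"
    by (intro continuous_on_det continuous_intros)
  then show ?thesis by (intro open_Collect_neq continuous_on_const)
qed


lemma L_linear:
  fixes A :: "real^'n::finite^'n"
  shows "linear (\<lambda>p::(real^'n^'n) \<times> (real^'n^'n). Pz A (fst p ** A - A ** fst p) + Pc A (snd p))"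
    (is "linear ?L")
proof (rule linearI)
  fix x y :: "(real^'n^'n) \<times> (real^'n^'n)" and c :: real
  show "?L (x + y) = ?L x + ?L y"
    by (simp add: vec_eq_iff Pz_def Pc_def matrix_add_ldistrib matrix_add_rdistrib' algebra_simps)
  show "?L (c *\<^sub>R x) = c *\<^sub>R ?L x"
    by (simp add: vec_eq_iff Pz_def Pc_def matrix_scale_left matrix_scale_right algebra_simps)
qed

lemma matrix_mul_lzero': "(0::real^'n::finite^'n) ** A = 0"
  by (simp add: vec_eq_iff matrix_matrix_mult_def)
lemma matrix_mul_rzero': "(A::real^'n::finite^'n) ** 0 = 0"
  by (simp add: vec_eq_iff matrix_matrix_mult_def)

lemma sim_inv_pow:
  fixes S N :: "real^'n::finite^'n"
  assumes "invertible S" "S ** N ** matrix_inv S = 0"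
  shows "N = 0"
proof -
  have "N = (matrix_inv S ** S) ** N ** (matrix_inv S ** S)" using inv_props[OF assms(1)] by simp
  also have "\<dots> = matrix_inv S ** (S ** N ** matrix_inv S) ** S" by (simp add: matrix_mul_assoc)
  also have "\<dots> = 0" using assms(2) by (simp add: matrix_mul_lzero' matrix_mul_rzero')
  finally show ?thesis .
qed

theorem corollary5p9:
  fixes P :: "'n::finite sign_pattern"
  assumes "\<exists>A \<in> qual_class P. nilpotent_mat A \<and> nSSP A"
  shows "\<exists>A' \<in> qual_class P. nilpotent_mat A' \<and> matpow A' (CARD('n) - 1) \<noteq> 0 \<and> nSSP A'"
proof -
  obtain A where A: "A \<in> qual_class P" "nilpotent_mat A" "nSSP A" using assms by blast
  obtain k where k: "matpow A k = 0" using A(2) unfolding nilpotent_mat_def by blast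
  obtain M where M: "\<forall>r>0. \<exists>t. 0 < t \<and> t < r \<and> matpow (A + t *\<^sub>R M) CARD('n) = 0 \<and>
           matpow (A + t *\<^sub>R M) (CARD('n) - 1) \<noteq> 0"
    using regular_approx[OF k] by blast
  obtain e1 where e1: "e1 > 0" "\<forall>B. dist B A < e1 \<longrightarrow> (\<forall>i j. (A $ i $ j = 0) = (B $ i $ j = 0)) \<longrightarrow> nSSP B"
    using nSSP_near[OF A(3)] by blast
  have evs: "eventually (\<lambda>B::real^'n^'n. \<forall>i j. (0 < A $ i $ j \<longrightarrow> 0 < B $ i $ j) \<and> (A $ i $ j < 0 \<longrightarrow> B $ i $ j < 0)) (nhds A)"
  proof (intro eventually_all_finite eventually_conj)
    fix i j
    have lim: "((\<lambda>B::real^'n^'n. B $ i $ j) \<longlongrightarrow> A $ i $ j) (nhds A)"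
      by (intro tendsto_vec_nth filterlim_ident)
    show "eventually (\<lambda>B::real^'n^'n. 0 < A $ i $ j \<longrightarrow> 0 < B $ i $ j) (nhds A)"
    proof (cases "0 < A $ i $ j")
      case True then show ?thesis using order_tendstoD(1)[OF lim True] by (auto elim: eventually_mono)
    qed simp
    show "eventually (\<lambda>B::real^'n^'n. A $ i $ j < 0 \<longrightarrow> B $ i $ j < 0) (nhds A)"
    proof (cases "A $ i $ j < 0")
      case True then show ?thesis using order_tendstoD(2)[OF lim True] by (auto elim: eventually_mono)
    qed simp
  qed
  obtain e2 where e2: "e2 > 0" "\<forall>B. dist B A < e2 \<longrightarrow> (\<forall>i j. (0 < A $ i $ j \<longrightarrow> 0 < B $ i $ j) \<and> (A $ i $ j < 0 \<longrightarrow> B $ i $ j < 0))"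
    using evs unfolding eventually_nhds_metric by blast
  define e0 where "e0 = min e1 e2"
  have e0: "e0 > 0" using e1 e2 unfolding e0_def by simp
  define S where "S = {x::real \<times> ((real^'n^'n) \<times> (real^'n^'n)). det (mat 1 + fst (snd x)) \<noteq> 0}"
  have oS: "open S" unfolding S_def by (rule open_S)
  have S0: "0 \<in> S" unfolding S_def by simp
  define F where "F x = (fst x, Pz A (Cj A M x) + Pc A (snd (snd x)))" for x :: "real \<times> ((real^'n^'n) \<times> (real^'n^'n))"
  have C0: "Cj A M 0 = A" using J0[where 'n='n] by (simp add: Cj_def)
  have F0: "F 0 = 0" unfolding F_def C0 by (simp add: Pz_def Pc_def vec_eq_iff zero_prod_def)
  have cCj: "continuous_on S (Cj A M)" unfolding S_def by (rule Cj_cont)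
  have cF: "continuous_on S F" unfolding F_def
    by (intro continuous_intros bounded_linear.continuous_on[OF bl_Pz] bounded_linear.continuous_on[OF bl_Pc] cCj)
  have "isCont (Cj A M) 0" using cCj oS S0 continuous_on_eq_continuous_at by blast
  then have "eventually (\<lambda>x. dist (Cj A M x) A < e0) (at 0)"
    using tendstoD[of "Cj A M" A "at 0" e0] e0 C0 by (simp add: isCont_def)
  then obtain d1 where d1: "d1 > 0" "\<forall>x. x \<noteq> 0 \<and> dist x 0 < d1 \<longrightarrow> dist (Cj A M x) A < e0"
    unfolding eventually_at by auto
  obtain d2 where d2: "d2 > 0" "ball 0 d2 \<subseteq> S" using oS S0 open_contains_ball by blast
  define T where "T = ball (0::real \<times> ((real^'n^'n) \<times> (real^'n^'n))) (min d1 d2)"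
  have TS: "T \<subseteq> S" using d2 unfolding T_def by auto
  have T0: "0 \<in> interior T" unfolding T_def using d1 d2 by simp
  have Tclose: "x \<in> T \<Longrightarrow> dist (Cj A M x) A < e0" for x
  proof (cases "x = 0")
    case True then show ?thesis using e0 C0 by simp
  next
    case False
    assume "x \<in> T"
    then have "dist x 0 < d1" unfolding T_def by (simp add: dist_commute)
    then show ?thesis using d1(2) False by blast
  qed
  define f' where "f' h = (fst h, Pz A (fst h *\<^sub>R M + fst (snd h) ** A - A ** fst (snd h)) + Pc A (snd (snd h)))"
    for h :: "real \<times> ((real^'n^'n) \<times> (real^'n^'n))"
  have dF: "(F has_derivative f') (at 0)" unfolding F_def f'_def
    by (intro has_derivative_Pair has_derivative_fst has_derivative_ident has_derivative_add
        bounded_linear.has_derivative[OF bl_Pz Cj_deriv] bounded_linear.has_derivative[OF bl_Pc]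
        has_derivative_snd)
  let ?L = "\<lambda>p::(real^'n^'n) \<times> (real^'n^'n). Pz A (fst p ** A - A ** fst p) + Pc A (snd p)"
  obtain gL where gL: "linear gL" "?L \<circ> gL = id"
    using linear_surjective_right_inverse[OF L_linear L_surj[OF A(3)]] by blast
  define g' where "g' p = (fst p, gL (snd p - fst p *\<^sub>R Pz A M))" for p :: "real \<times> (real^'n^'n)"
  have lg': "linear g'"
  proof (rule linearI)
    fix x y :: "real \<times> (real^'n^'n)" and c :: real
    show "g' (x + y) = g' x + g' y"
    proof -
      have eq: "snd (x + y) - fst (x + y) *\<^sub>R Pz A M = (snd x - fst x *\<^sub>R Pz A M) + (snd y - fst y *\<^sub>R Pz A M)"
        by (simp add: algebra_simps scaleR_add_left)
      have e: "gL (snd (x + y) - fst (x + y) *\<^sub>R Pz A M) = gL (snd x - fst x *\<^sub>R Pz A M) + gL (snd y - fst y *\<^sub>R Pz A M)"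
        by (simp only: eq linear_add[OF gL(1)])
      show ?thesis unfolding g'_def e by simp
    qed
    show "g' (c *\<^sub>R x) = c *\<^sub>R g' x"
    proof -
      have eq: "snd (c *\<^sub>R x) - fst (c *\<^sub>R x) *\<^sub>R Pz A M = c *\<^sub>R (snd x - fst x *\<^sub>R Pz A M)"
        by (simp add: algebra_simps)
      have e: "gL (snd (c *\<^sub>R x) - fst (c *\<^sub>R x) *\<^sub>R Pz A M) = c *\<^sub>R gL (snd x - fst x *\<^sub>R Pz A M)"
        by (simp only: eq linear_scale[OF gL(1)])
      show ?thesis unfolding g'_def e by simp
    qed
  qed
  have bg': "bounded_linear g'" using lg' linear_conv_bounded_linear by blast
  have fg: "f' \<circ> g' = id"
  proof
    fix p :: "real \<times> (real^'n^'n)"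
    obtain s Y where p: "p = (s, Y)" by (cases p)
    obtain H V where HV: "gL (Y - s *\<^sub>R Pz A M) = (H, V)" by (cases "gL (Y - s *\<^sub>R Pz A M)")
    have "(?L \<circ> gL) (Y - s *\<^sub>R Pz A M) = id (Y - s *\<^sub>R Pz A M)" using gL(2) by (rule arg_cong)
    then have LHV: "?L (H, V) = Y - s *\<^sub>R Pz A M" unfolding comp_apply id_apply HV .
    have "Pz A (s *\<^sub>R M + H ** A - A ** H) = s *\<^sub>R Pz A M + Pz A (H ** A - A ** H)"
      by (simp add: Pz_def vec_eq_iff)
    then show "(f' \<circ> g') p = id p"
      using LHV unfolding f'_def g'_def p by (simp add: HV add.assoc)
  qed
  have "F 0 \<in> interior (F ` T)"
    by (rule sussmann_open_mapping[OF oS cF S0 dF bg' fg TS T0])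
  then obtain r where r: "r > 0" "ball 0 r \<subseteq> F ` T" unfolding F0 mem_interior by blast
  obtain t where t: "0 < t" "t < r" "matpow (A + t *\<^sub>R M) CARD('n) = 0"
      "matpow (A + t *\<^sub>R M) (CARD('n) - 1) \<noteq> 0"
    using M r(1) by blast
  have "norm (t, 0::real^'n^'n) = t" using t(1) by (simp add: norm_Pair)
  then have "(t, 0) \<in> ball (0::real \<times> (real^'n^'n)) r" using t(2) by (simp add: dist_norm)
  then have "(t, 0) \<in> F ` T" by (rule subsetD[OF r(2)])
  then obtain x where x: "x \<in> T" "F x = (t, 0)" by (metis imageE)
  define B where "B = Cj A M x"
  have xt: "fst x = t" using x(2) unfolding F_def by simp
  have Pz0: "Pz A B + Pc A (snd (snd x)) = 0" using x(2) unfolding F_def B_def by simp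
  have Bz: "A $ i $ j = 0 \<Longrightarrow> B $ i $ j = 0" for i j
  proof -
    assume a: "A $ i $ j = 0"
    have "(Pz A B + Pc A (snd (snd x))) $ i $ j = 0" using Pz0 by simp
    then show ?thesis using a by (simp add: Pz_def Pc_def)
  qed
  have dB: "dist B A < e0" using Tclose[OF x(1)] unfolding B_def .
  have sg: "\<forall>i j. (0 < A $ i $ j \<longrightarrow> 0 < B $ i $ j) \<and> (A $ i $ j < 0 \<longrightarrow> B $ i $ j < 0)"
    using e2(2) dB unfolding e0_def by simp
  have zeq: "\<forall>i j. (A $ i $ j = 0) = (B $ i $ j = 0)"
  proof (intro allI iffI)
    fix i j
    show "A $ i $ j = 0 \<Longrightarrow> B $ i $ j = 0" by (rule Bz)
    assume "B $ i $ j = 0"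
    then show "A $ i $ j = 0" using sg[rule_format, of i j] by (cases "A $ i $ j > 0"; cases "A $ i $ j < 0") auto
  qed
  have nB: "nSSP B" using e1(2) dB zeq unfolding e0_def by simp
  have qB: "B \<in> qual_class P"
    unfolding qual_class_def
  proof (intro CollectI allI)
    fix i j
    have hA: "has_sign (A $ i $ j) (P $ i $ j)" using A(1) unfolding qual_class_def by blast
    show "has_sign (B $ i $ j) (P $ i $ j)"
      using hA sg[rule_format, of i j] zeq[rule_format, of i j]
      by (cases "P $ i $ j") (auto simp: has_sign_def)
  qed
  have invS: "invertible (mat 1 + fst (snd x))" using TS x(1) unfolding S_def by (auto simp: invertible_det_nz)
  have Beq: "B = (mat 1 + fst (snd x)) ** (A + t *\<^sub>R M) ** matrix_inv (mat 1 + fst (snd x))"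
    unfolding B_def Cj_def xt ..
  have nilB: "nilpotent_mat B"
    unfolding nilpotent_mat_def Beq matpow_sim[OF invS]
    using t(3) by (intro exI[of _ "CARD('n)"]) (simp add: matrix_mul_lzero' matrix_mul_rzero')
  have idxB: "matpow B (CARD('n) - 1) \<noteq> 0"
    unfolding Beq matpow_sim[OF invS] using sim_inv_pow[OF invS] t(4) by blast
  show ?thesis using qB nilB idxB nB by blast
qed

end
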